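(* For every copula $C\in\mathcal{F}^3_\Pi$ we have $d_\infty(C,\psi(C))\le\frac18$. Moreover, for every $C\in\mathcal{F}^3_\Pi$ the following are equivalent: (a) $d_\infty(C,\psi(C))=\frac18$; (b) either $\mu_C[(0,\tfrac12)\times(0,\tfrac12)\times(0,\tfrac12)]=\mu_C[(0,\tfrac12)\times(\tfrac12,1)\times(\tfrac12,1)]=\mu_C[(\tfrac12,1)\times(\tfrac12,1)\times(0,\tfrac12)]=\mu_C[(\tfrac12,1)\times(0,\tfrac12)\times(\tfrac12,1)]=\tfrac14$, or $\mu_C[(0,\tfrac12)\times(0,\tfrac12)\times(\tfrac12,1)]=\mu_C[(0,\tfrac12)\times(\tfrac12,1)\times(0,\tfrac12)]=\mu_C[(\tfrac12,1)\times(\tfrac12,1)\times(\tfrac12,1)]=\mu_C[(\tfrac12,1)\times(0,\tfrac12)\times(0,\tfrac12)]=\tfrac14$.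
   Context: $\mathbb{I}=[0,1]$, $\lambda$ Lebesgue measure, $\Pi$ the independence copula, $\mu_C$ the probability measure of a copula $C$, $d_\infty(C_1,C_2)=\max_{\mathbf{x}\in\mathbb{I}^3}|C_1(\mathbf{x})-C_2(\mathbf{x})|$. $\mathcal{F}^3_\Pi$ is the class of three-dimensional copulas $C$ whose bivariate marginals satisfy $C_{13}=\Pi=C_{23}$, where $C_{13}(u_1,v)=C(u_1,1,v)$ and $C_{23}(u_2,v)=C(1,u_2,v)$. Points of $\mathbb{I}^3$ are written $(\mathbf{u},v)$, $\mathbf{u}=(u_1,u_2)$. For a three-dimensional copula $C$, $K_C$ is (a version of) the regular conditional distribution of $(U_1,U_2)$ given $U_3=v$, $(U_1,U_2,U_3)\sim C$; $F_{1|3}(u_1|t)=K_C(t,[0,u_1]\times\mathbb{I})$, $F_{2|3}(u_2|t)=K_C(t,\mathbb{I}\times[0,u_2])$; for $\lambda$-a.e. $t$ the conditional copula $C^t_{12;3}$ is the (a.e. unique, since these conditional marginals are continuous for $C\in\mathcal{F}^3_\Pi$) bivariate copula with $K_C(t,[\mathbf{0},\mathbf{u}])=C^t_{12;3}(F_{1|3}(u_1|t),F_{2|3}(u_2|t))$. The partial copula is $C_p(\mathbf{s})=\int_{\mathbb{I}}C^t_{12;3}(\mathbf{s})\,d\lambda(t)$ and the partial vine copula is $\psi(C)(\mathbf{u},v)=\int_{[0,v]}C_p(F_{1|3}(u_1|t),F_{2|3}(u_2|t))\,d\lambda(t)$. *)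

theory Defs
  imports "HOL-Probability.Probability"
begin

text \<open>Points of the unit cube are written (u1, u2, v) = (u1, (u2, v)).\<close>

definition unit_cube3 :: "(real \<times> real \<times> real) set" where
  "unit_cube3 = {0..1} \<times> {0..1} \<times> {0..1}"

definition unit_square :: "(real \<times> real) set" where
  "unit_square = {0..1} \<times> {0..1}"

definition copula_measure3 :: "(real \<times> real \<times> real) measure \<Rightarrow> bool" where
  "copula_measure3 M \<longleftrightarrow> prob_space M \<and> sets M = sets borel \<and>
     emeasure M unit_cube3 = 1 \<and>
     (\<forall>u\<in>{0..1}. measure M {x. fst x \<le> u} = u \<and>
                  measure M {x. fst (snd x) \<le> u} = u \<and>
                  measure M {x. snd (snd x) \<le> u} = u)"

definition copula_measure2 :: "(real \<times> real) measure \<Rightarrow> bool" where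
  "copula_measure2 N \<longleftrightarrow> prob_space N \<and> sets N = sets borel \<and>
     emeasure N unit_square = 1 \<and>
     (\<forall>u\<in>{0..1}. measure N {x. fst x \<le> u} = u \<and> measure N {x. snd x \<le> u} = u)"

text \<open>A (3- resp. 2-dimensional) copula is (the restriction to the unit cube of) the
  distribution function of such a measure; values outside the cube are irrelevant.\<close>

definition is_cdf3_of :: "(real \<times> real \<times> real \<Rightarrow> real) \<Rightarrow> (real \<times> real \<times> real) measure \<Rightarrow> bool" where
  "is_cdf3_of C M \<longleftrightarrow> (\<forall>x\<in>unit_cube3.
      C x = measure M ({0..fst x} \<times> {0..fst (snd x)} \<times> {0..snd (snd x)}))"

definition copula3 :: "(real \<times> real \<times> real \<Rightarrow> real) \<Rightarrow> bool" where
  "copula3 C \<longleftrightarrow> (\<exists>M. copula_measure3 M \<and> is_cdf3_of C M)"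

definition copula2 :: "(real \<times> real \<Rightarrow> real) \<Rightarrow> bool" where
  "copula2 D \<longleftrightarrow> (\<exists>N. copula_measure2 N \<and>
      (\<forall>s\<in>unit_square. D s = measure N ({0..fst s} \<times> {0..snd s})))"

definition mu_C :: "(real \<times> real \<times> real \<Rightarrow> real) \<Rightarrow> (real \<times> real \<times> real) measure" where
  "mu_C C = (THE M. copula_measure3 M \<and> is_cdf3_of C M)"

text \<open>The class F^3_Pi: C_13 = Pi = C_23.\<close>

definition F_Pi3 :: "(real \<times> real \<times> real \<Rightarrow> real) \<Rightarrow> bool" where
  "F_Pi3 C \<longleftrightarrow> copula3 C \<and>
     (\<forall>u1\<in>{0..1}. \<forall>v\<in>{0..1}. C (u1, 1, v) = u1 * v) \<and>
     (\<forall>u2\<in>{0..1}. \<forall>v\<in>{0..1}. C (1, u2, v) = u2 * v)"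

text \<open>K is a version of the regular conditional distribution of (U1,U2) given U3,
  where (U1,U2,U3) has law M.\<close>

definition reg_cond_dist :: "(real \<times> real \<times> real) measure \<Rightarrow> (real \<Rightarrow> (real \<times> real) measure) \<Rightarrow> bool" where
  "reg_cond_dist M K \<longleftrightarrow>
     (\<forall>t. prob_space (K t) \<and> sets (K t) = sets borel) \<and>
     (\<forall>A\<in>sets (borel :: (real \<times> real) measure). (\<lambda>t. measure (K t) A) \<in> borel_measurable borel) \<and>
     (\<forall>A\<in>sets (borel :: (real \<times> real) measure). \<forall>B\<in>sets (borel :: real measure).
        measure M {x\<in>space M. (fst x, fst (snd x)) \<in> A \<and> snd (snd x) \<in> B} =
        set_lebesgue_integral (distr M borel (\<lambda>x. snd (snd x))) B (\<lambda>t. measure (K t) A))"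

definition cond_marg1 :: "(real \<Rightarrow> (real \<times> real) measure) \<Rightarrow> real \<Rightarrow> real \<Rightarrow> real" where
  "cond_marg1 K u1 t = measure (K t) ({0..u1} \<times> {0..1})"

definition cond_marg2 :: "(real \<Rightarrow> (real \<times> real) measure) \<Rightarrow> real \<Rightarrow> real \<Rightarrow> real" where
  "cond_marg2 K u2 t = measure (K t) ({0..1} \<times> {0..u2})"

definition cond_copula :: "(real \<Rightarrow> (real \<times> real) measure) \<Rightarrow> (real \<Rightarrow> real \<times> real \<Rightarrow> real) \<Rightarrow> bool" where
  "cond_copula K Ct \<longleftrightarrow> (AE t in lborel. t \<in> {0..1} \<longrightarrow>
      copula2 (Ct t) \<and>
      (\<forall>u1\<in>{0..1}. \<forall>u2\<in>{0..1}.
         measure (K t) ({0..u1} \<times> {0..u2}) = Ct t (cond_marg1 K u1 t, cond_marg2 K u2 t)))"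

definition partial_copula :: "(real \<Rightarrow> real \<times> real \<Rightarrow> real) \<Rightarrow> real \<times> real \<Rightarrow> real" where
  "partial_copula Ct s = set_lebesgue_integral lebesgue {0..1} (\<lambda>t. Ct t s)"

definition psi :: "(real \<Rightarrow> (real \<times> real) measure) \<Rightarrow> (real \<Rightarrow> real \<times> real \<Rightarrow> real)
                   \<Rightarrow> real \<times> real \<times> real \<Rightarrow> real" where
  "psi K Ct x = set_lebesgue_integral lebesgue {0..snd (snd x)}
      (\<lambda>t. partial_copula Ct (cond_marg1 K (fst x) t, cond_marg2 K (fst (snd x)) t))"

definition d_inf :: "(real \<times> real \<times> real \<Rightarrow> real) \<Rightarrow> (real \<times> real \<times> real \<Rightarrow> real) \<Rightarrow> real" where
  "d_inf C1 C2 = (SUP x\<in>unit_cube3. \<bar>C1 x - C2 x\<bar>)"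

end

theory Submission
  imports Defs
begin

lemma meas_eq_atMost:
  fixes N1 N2 :: "'a::ordered_euclidean_space measure"
  assumes fin: "finite_measure N1" and s1: "sets N1 = sets borel" and s2: "sets N2 = sets borel"
    and eq: "\<And>a. emeasure N1 {..a} = emeasure N2 {..a}"
  shows "N1 = N2"
proof (rule measure_eqI_generator_eq[where E="range atMost" and \<Omega>=UNIV and A="\<lambda>i. {..real i *\<^sub>R One}"])
  show "Int_stable (range atMost :: 'a set set)"
    unfolding Int_stable_def
  proof safe
    fix a b :: 'a
    have "{..a} \<inter> {..b} = {..inf a b}" by auto
    then show "{..a} \<inter> {..b} \<in> range atMost" by blast
  qed
  show "range atMost \<subseteq> Pow (UNIV::'a set)" by auto
  show "sets N1 = sigma_sets UNIV (range atMost)" "sets N2 = sigma_sets UNIV (range atMost)"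
    unfolding s1 s2 by (subst borel_eq_atMost, simp)+
  show "range (\<lambda>i. {..real i *\<^sub>R (One::'a)}) \<subseteq> range atMost" by auto
  show "emeasure N1 {..real i *\<^sub>R One} \<noteq> \<infinity>" for i
    using finite_measure.emeasure_finite[OF fin] by (simp add: top_ennreal_def[symmetric]) 
  show "(\<Union>i. {..real i *\<^sub>R (One::'a)}) = UNIV"
  proof safe
    fix x :: 'a
    obtain k :: nat where k: "norm x \<le> real k" using real_arch_simple by blast
    have "x \<le> real k *\<^sub>R One"
      unfolding eucl_le[where 'a='a]
    proof (intro ballI)
      fix i :: 'a assume i: "i \<in> Basis"
      have "i \<bullet> One = 1" using i by (simp add: inner_sum_right inner_Basis if_distrib sum.delta cong: if_cong)
      moreover have "x \<bullet> i \<le> norm x" using Basis_le_norm[OF i, of x] by (simp add: inner_commute)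
      ultimately show "x \<bullet> i \<le> (real k *\<^sub>R One) \<bullet> i" using k by (simp add: inner_commute)
    qed
    then show "x \<in> (\<Union>i. {..real i *\<^sub>R One})" by auto
  qed auto
qed (use eq in auto)



definition bx :: "real \<Rightarrow> real \<Rightarrow> real \<Rightarrow> (real \<times> real \<times> real) set" where
  "bx a b c = {0..a} \<times> {0..b} \<times> {0..c}"

lemma bx_borel[measurable]: "bx a b c \<in> sets borel"
  unfolding bx_def by (intro borel_Times borel_closed) auto

lemma cube_borel[measurable]: "unit_cube3 \<in> sets borel"
  unfolding unit_cube3_def by (intro borel_Times borel_closed) auto

lemma sum8: "(\<Sum>q\<in>(UNIV::(bool\<times>bool\<times>bool) set). f q) = f (False,False,False) + f (False,False,True) + f (False,True,False) + f (False,True,True) + f (True,False,False) + f (True,False,True) + f (True,True,False) + f (True,True,True)"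
  by (simp add: UNIV_Times_UNIV[symmetric] UNIV_bool sum.cartesian_product[symmetric] add.assoc del: UNIV_Times_UNIV)

definition LH :: "bool \<Rightarrow> real set" where
  "LH b = (if b then {1/2<..<1} else {0<..<1/2})"

definition cell :: "bool \<times> bool \<times> bool \<Rightarrow> (real \<times> real \<times> real) set" where
  "cell q = LH (fst q) \<times> LH (fst (snd q)) \<times> LH (snd (snd q))"

lemma cell_borel[measurable]: "cell q \<in> sets borel"
  unfolding cell_def LH_def by (intro borel_Times borel_open) auto

lemma LH_Int: "{0..1/2::real} \<inter> LH False = LH False" "{0..1/2::real} \<inter> LH True = {}"
  "{0..1::real} \<inter> LH False = LH False" "{0..1::real} \<inter> LH True = LH True"
  by (auto simp: LH_def)

lemma arith_bound:
  fixes a c u1 u2 v :: real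
  assumes r: "0 \<le> u1" "u1 \<le> 1" "0 \<le> u2" "u2 \<le> 1" "0 \<le> v" "v \<le> 1"
    and a1: "a \<le> u1 * v" and a2: "a \<le> u2 * v" and a3: "u1 * v + u2 * v - v \<le> a" and a4: "0 \<le> a"
    and b1: "c - a \<le> u1 * (1 - v)" and b2: "c - a \<le> u2 * (1 - v)"
    and b3: "u1 * (1 - v) + u2 * (1 - v) - (1 - v) \<le> c - a" and b4: "0 \<le> c - a"
  shows "\<bar>a - v * c\<bar> \<le> 1/8 \<and> (\<bar>a - v * c\<bar> = 1/8 \<longrightarrow>
     v = 1/2 \<and> u1 = 1/2 \<and> u2 = 1/2 \<and> ((a = 1/4 \<and> c = 1/4) \<or> (a = 0 \<and> c = 1/4)))"
proof -
  define m where "m = min u1 u2"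
  define p where "p = max 0 (u1 + u2 - 1)"
  define w where "w = v * (1 - v)"
  have am: "a \<le> v * m" using a1 a2 unfolding m_def by (simp add: mult.commute min_def)
  have ap: "v * p \<le> a" using a3 a4 unfolding p_def by (auto simp: max_def algebra_simps)
  have bm: "c - a \<le> (1 - v) * m" using b1 b2 unfolding m_def by (simp add: mult.commute min_def)
  have bp: "(1 - v) * p \<le> c - a" using b3 b4 unfolding p_def by (auto simp: max_def algebra_simps)
  have e: "a - v * c = (1 - v) * a - v * (c - a)" by (simp add: algebra_simps)
  have up: "a - v * c \<le> w * (m - p)"
  proof -
    have "(1 - v) * a \<le> (1 - v) * (v * m)" using am r by (intro mult_left_mono) auto
    moreover have "v * ((1 - v) * p) \<le> v * (c - a)" using bp r by (intro mult_left_mono) auto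
    ultimately show ?thesis unfolding e w_def by (simp add: algebra_simps)
  qed
  have lo: "- (w * (m - p)) \<le> a - v * c"
  proof -
    have "(1 - v) * (v * p) \<le> (1 - v) * a" using ap r by (intro mult_left_mono) auto
    moreover have "v * (c - a) \<le> v * ((1 - v) * m)" using bm r by (intro mult_left_mono) auto
    ultimately show ?thesis unfolding e w_def by (simp add: algebra_simps)
  qed
  have w0: "0 \<le> w" using r unfolding w_def by simp
  have w4: "w \<le> 1/4"
  proof -
    have "0 \<le> (v - 1/2)^2" by simp
    then show ?thesis unfolding w_def by (simp add: power2_eq_square algebra_simps)
  qed
  have d0: "0 \<le> m - p" and d2: "m - p \<le> 1/2" using r unfolding m_def p_def by (auto simp: min_def max_def)
  have wd: "w * (m - p) \<le> 1/4 * (m - p)" using w4 d0 by (intro mult_right_mono) auto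
  have wd2: "w * (m - p) \<le> w * (1/2)" using w0 d2 by (intro mult_left_mono) auto
  have wd8: "w * (m - p) \<le> 1/8" using wd d2 by argo
  have bound: "\<bar>a - v * c\<bar> \<le> 1/8" unfolding abs_le_iff using up lo wd8 by (intro conjI) argo+
  moreover have "v = 1/2 \<and> u1 = 1/2 \<and> u2 = 1/2 \<and> ((a = 1/4 \<and> c = 1/4) \<or> (a = 0 \<and> c = 1/4))"
    if eq: "\<bar>a - v * c\<bar> = 1/8"
  proof -
    have ge: "1/8 \<le> w * (m - p)" using eq up lo by (auto simp: abs_if split: if_splits)
    have ww: "w = 1/4" using ge wd2 w4 by argo
    have dd: "m - p = 1/2" using ge wd d2 by argo
    have "(v - 1/2)^2 = 0" using ww unfolding w_def by (simp add: power2_eq_square algebra_simps)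
    then have v: "v = 1/2" by simp
    have u: "u1 = 1/2 \<and> u2 = 1/2" using dd r unfolding m_def p_def by (auto simp: min_def max_def split: if_splits)
    have "a \<le> 1/4" "0 \<le> a" "c - a \<le> 1/4" "0 \<le> c - a" using a1 a4 b1 b4 u v by auto
    moreover have "\<bar>a - c/2\<bar> = 1/8" using eq v by simp
    ultimately have "(a = 1/4 \<and> c = 1/4) \<or> (a = 0 \<and> c = 1/4)" by (auto simp: abs_if split: if_splits)
    then show ?thesis using u v by simp
  qed
  ultimately show ?thesis by blast
qed

lemma UNIV_borel: "UNIV \<in> sets borel"
  by (metis sets.top space_borel)

lemmas bor = borel_Times atLeastAtMost_borel greaterThanAtMost_borel greaterThanLessThan_borel UNIV_borel

definition Cm :: "(real \<times> real \<times> real) measure \<Rightarrow> real \<times> real \<times> real \<Rightarrow> real" where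
  "Cm M x = measure M (bx (fst x) (fst (snd x)) (snd (snd x)))"

locale cm3 = prob_space M for M :: "(real \<times> real \<times> real) measure" +
  assumes sets_M[measurable_cong]: "sets M = sets borel"
    and cube1: "emeasure M unit_cube3 = 1"
    and mg1: "\<And>u. u \<in> {0..1} \<Longrightarrow> measure M {x. fst x \<le> u} = u"
    and mg2: "\<And>u. u \<in> {0..1} \<Longrightarrow> measure M {x. fst (snd x) \<le> u} = u"
    and mg3: "\<And>u. u \<in> {0..1} \<Longrightarrow> measure M {x. snd (snd x) \<le> u} = u"
begin

lemma space_M: "space M = UNIV"
  using sets_eq_imp_space_eq[OF sets_M] by simp

lemma inM: "X \<in> sets borel \<Longrightarrow> X \<in> sets M"
  by (simp add: sets_M)

lemma meas_cube: assumes "X \<in> sets borel" shows "measure M X = measure M (X \<inter> unit_cube3)"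
proof -
  have c1: "measure M unit_cube3 = 1" using cube1 by (simp add: emeasure_eq_measure)
  have "measure M (UNIV - unit_cube3) = 1 - 1"
    using finite_measure_compl[of unit_cube3] c1 prob_space space_M by (simp add: inM)
  then have z: "measure M (X - unit_cube3) = 0"
    using finite_measure_mono[of "X - unit_cube3" "UNIV - unit_cube3"]
    using measure_nonneg[of M "X - unit_cube3"] by (simp add: inM Diff_mono)
  have "measure M X = measure M (X \<inter> unit_cube3) + measure M (X - unit_cube3)"
    using finite_measure_Union[of "X \<inter> unit_cube3" "X - unit_cube3"] assms
    by (simp add: inM Int_Diff_Un Int_Diff_disjoint)
  then show ?thesis using z by simp
qed

lemma plane_null:
  fixes p :: "real \<times> real \<times> real \<Rightarrow> real"
  assumes pm[measurable]: "p \<in> borel_measurable borel"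
    and mg: "\<And>u. u \<in> {0..1} \<Longrightarrow> measure M {x. p x \<le> u} = u"
    and pc: "\<And>x. x \<in> unit_cube3 \<Longrightarrow> p x \<in> {0..1}"
  shows "measure M {x. p x = c} = 0"
proof -
  have sets[simp]: "{x. p x \<le> u} \<in> sets M" "{x. p x = u} \<in> sets M" for u
  proof -
    have "{x. p x \<le> u} = p -` {..u} \<inter> space borel" "{x. p x = u} = p -` {u} \<inter> space borel" by auto
    then show "{x. p x \<le> u} \<in> sets M" "{x. p x = u} \<in> sets M"
      using measurable_sets[OF pm, of "{..u}"] measurable_sets[OF pm, of "{u}"] by (auto intro!: inM)
  qed
  have "measure M {x. p x = c} \<le> 0 + e" if e: "e > 0" for e
  proof (cases "c \<in> {0..1}")
    case False
    then have "{x. p x = c} \<inter> unit_cube3 = {}" using pc by auto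
    then show ?thesis using meas_cube[of "{x. p x = c}"] e by simp
  next
    case True
    show ?thesis
    proof (cases "c \<le> e")
      case True2: True
      have "measure M {x. p x = c} \<le> measure M {x. p x \<le> c}"
        by (intro finite_measure_mono) auto
      also have "\<dots> = c" using mg True by blast
      finally show ?thesis using True2 by simp
    next
      case False
      have "{x. p x = c} \<subseteq> {x. p x \<le> c} - {x. p x \<le> c - e}" using e by auto
      then have "measure M {x. p x = c} \<le> measure M ({x. p x \<le> c} - {x. p x \<le> c - e})"
        by (intro finite_measure_mono) auto
      also have "\<dots> = measure M {x. p x \<le> c} - measure M {x. p x \<le> c - e}"
        using e by (intro finite_measure_Diff) auto
      also have "\<dots> = e" using mg[of c] mg[of "c - e"] True False e by auto
      finally show ?thesis by simp
    qed
  qed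
  then have "measure M {x. p x = c} \<le> 0" by (rule field_le_epsilon)
  then show ?thesis using measure_nonneg[of M] by (simp add: order_antisym)
qed

lemma null1: "measure M {x. fst x = c} = 0"
  by (rule plane_null[OF _ mg1]) (auto intro!: borel_measurable_continuous_onI continuous_on_fst continuous_on_snd continuous_on_id simp: unit_cube3_def)
lemma null2: "measure M {x. fst (snd x) = c} = 0"
  by (rule plane_null[OF _ mg2]) (auto intro!: borel_measurable_continuous_onI continuous_on_fst continuous_on_snd continuous_on_id simp: unit_cube3_def)
lemma null3: "measure M {x. snd (snd x) = c} = 0"
  by (rule plane_null[OF _ mg3]) (auto intro!: borel_measurable_continuous_onI continuous_on_fst continuous_on_snd continuous_on_id simp: unit_cube3_def)


lemma null_planes: "AE x in M. x \<in> unit_cube3 \<and> fst x \<notin> {0, 1/2, 1} \<and> fst (snd x) \<notin> {0, 1/2, 1} \<and> snd (snd x) \<notin> {0, 1/2, 1}"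
proof -
  have ns: "X \<in> sets borel \<Longrightarrow> measure M X = 0 \<Longrightarrow> X \<in> null_sets M" for X
    by (simp add: inM emeasure_eq_measure null_setsI)
  have [measurable]: "{x::real\<times>real\<times>real. fst x = c} \<in> sets borel" "{x::real\<times>real\<times>real. fst (snd x) = c} \<in> sets borel"
     "{x::real\<times>real\<times>real. snd (snd x) = c} \<in> sets borel" for c
    by (auto intro!: borel_closed closed_Collect_eq continuous_on_fst continuous_on_snd continuous_on_id continuous_on_const
      continuous_on_compose2[where g=fst and f=snd])
  have "(- unit_cube3) \<in> null_sets M"
    using meas_cube[of "- unit_cube3"] by (intro ns) auto
  then have a0: "AE x in M. x \<in> unit_cube3" by (rule AE_I') auto
  have a1: "AE x in M. fst x \<noteq> c" for c
    using ns[of "{x. fst x = c}", OF _ null1] by (rule AE_I') auto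
  have a2: "AE x in M. fst (snd x) \<noteq> c" for c
    using ns[of "{x. fst (snd x) = c}", OF _ null2] by (rule AE_I') auto
  have a3: "AE x in M. snd (snd x) \<noteq> c" for c
    using ns[of "{x. snd (snd x) = c}", OF _ null3] by (rule AE_I') auto
  show ?thesis using a0 a1[of 0] a1[of "1/2"] a1[of 1] a2[of 0] a2[of "1/2"] a2[of 1] a3[of 0] a3[of "1/2"] a3[of 1]
    by eventually_elim auto
qed

lemma split8: assumes X: "X \<in> sets borel"
  shows "measure M X = (\<Sum>q\<in>UNIV. measure M (X \<inter> cell q))"
proof -
  have memb: "x \<in> (\<Union>q\<in>UNIV. X \<inter> cell q)" if "x \<in> X" "x \<in> unit_cube3" "fst x \<notin> {0, 1/2, 1}" "fst (snd x) \<notin> {0, 1/2, 1}"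
     "snd (snd x) \<notin> {0, 1/2, 1}" for x
  proof -
    have e: "t \<in> {0..1} \<Longrightarrow> t \<notin> {0, 1/2, 1} \<Longrightarrow> t \<in> LH (t > 1/2)" for t :: real
      by (auto simp: LH_def)
    have "x \<in> cell (fst x > 1/2, fst (snd x) > 1/2, snd (snd x) > 1/2)"
      using that e unfolding cell_def unit_cube3_def by (cases x) auto
    then show ?thesis using that by blast
  qed
  have "measure M X = measure M (\<Union>q\<in>UNIV. X \<inter> cell q)"
  proof (rule measure_eq_AE)
    show "AE x in M. (x \<in> X) = (x \<in> (\<Union>q\<in>UNIV. X \<inter> cell q))"
      using null_planes by eventually_elim (use memb in blast)
  qed (use X in \<open>auto intro!: inM\<close>)
  also have "\<dots> = (\<Sum>q\<in>UNIV. measure M (X \<inter> cell q))"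
  proof (rule finite_measure_finite_Union)
    show "(\<lambda>q. X \<inter> cell q) ` UNIV \<subseteq> sets M" using X by (auto intro!: inM)
    show "disjoint_family_on (\<lambda>q. X \<inter> cell q) UNIV"
      unfolding disjoint_family_on_def cell_def LH_def by (auto split: if_splits)
  qed simp
  finally show ?thesis .
qed

lemma split8_bx: "measure M (bx a b c) = (\<Sum>q\<in>UNIV. measure M (({0..a} \<inter> LH (fst q)) \<times> ({0..b} \<inter> LH (fst (snd q))) \<times> ({0..c} \<inter> LH (snd (snd q)))))"
  using split8[OF bx_borel[of a b c]] unfolding bx_def cell_def by (simp add: Times_Int_Times)


lemma slab:
  fixes p :: "real \<times> real \<times> real \<Rightarrow> real"
  assumes pm[measurable]: "p \<in> borel_measurable borel"
    and mg: "\<And>u. u \<in> {0..1} \<Longrightarrow> measure M {x. p x \<le> u} = u"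
    and ab: "a \<in> {0..1}" "b \<in> {0..1}"
  shows "measure M {z. a < p z \<and> p z \<le> b} \<le> \<bar>b - a\<bar>"
proof (cases "b \<le> a")
  case True
  then have e: "{z. a < p z \<and> p z \<le> b} = {}" by auto
  show ?thesis unfolding e by simp
next
  case False
  have sets[simp]: "{x. p x \<le> u} \<in> sets M" for u
  proof -
    have "{x. p x \<le> u} = p -` {..u} \<inter> space borel" by auto
    then show "{x. p x \<le> u} \<in> sets M"
      using measurable_sets[OF pm, of "{..u}"] by (auto intro!: inM)
  qed
  have "{z. a < p z \<and> p z \<le> b} = {x. p x \<le> b} - {x. p x \<le> a}" by auto
  then have "measure M {z. a < p z \<and> p z \<le> b} = measure M {x. p x \<le> b} - measure M {x. p x \<le> a}"
    using False by (simp add: finite_measure_Diff subset_eq)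
  also have "\<dots> = b - a" using mg ab by simp
  finally show ?thesis by simp
qed

lemma lip_half:
  assumes x: "x \<in> unit_cube3" and y: "y \<in> unit_cube3"
  shows "measure M (bx (fst x) (fst (snd x)) (snd (snd x))) - measure M (bx (fst y) (fst (snd y)) (snd (snd y)))
    \<le> \<bar>fst x - fst y\<bar> + \<bar>fst (snd x) - fst (snd y)\<bar> + \<bar>snd (snd x) - snd (snd y)\<bar>"
proof -
  define X where "X = bx (fst x) (fst (snd x)) (snd (snd x))"
  define Y where "Y = bx (fst y) (fst (snd y)) (snd (snd y))"
  define S1 where "S1 = {z::real\<times>real\<times>real. fst y < fst z \<and> fst z \<le> fst x}"
  define S2 where "S2 = {z::real\<times>real\<times>real. fst (snd y) < fst (snd z) \<and> fst (snd z) \<le> fst (snd x)}"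
  define S3 where "S3 = {z::real\<times>real\<times>real. snd (snd y) < snd (snd z) \<and> snd (snd z) \<le> snd (snd x)}"
  have m1: "(\<lambda>z::real\<times>real\<times>real. fst z) \<in> borel_measurable borel"
    "(\<lambda>z::real\<times>real\<times>real. fst (snd z)) \<in> borel_measurable borel"
    "(\<lambda>z::real\<times>real\<times>real. snd (snd z)) \<in> borel_measurable borel"
    by (auto intro!: borel_measurable_continuous_onI continuous_on_fst continuous_on_snd continuous_on_id)
  have ss[simp]: "S1 \<in> sets M" "S2 \<in> sets M" "S3 \<in> sets M"
    unfolding S1_def S2_def S3_def using m1 by (auto intro!: inM)
  have ss2: "S1 \<union> S2 \<in> sets M" "S1 \<union> S2 \<union> S3 \<in> sets M" using ss by (intro sets.Un; simp)+
  have sXY[simp]: "X \<in> sets M" "Y \<in> sets M" unfolding X_def Y_def by (auto intro!: inM)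
  have r: "fst x \<in> {0..1}" "fst (snd x) \<in> {0..1}" "snd (snd x) \<in> {0..1}"
     "fst y \<in> {0..1}" "fst (snd y) \<in> {0..1}" "snd (snd y) \<in> {0..1}"
    using x y by (auto simp: unit_cube3_def)
  have "measure M X - measure M Y \<le> measure M (X - Y)"
    using finite_measure_Diff'[of X Y] finite_measure_mono[of "X \<inter> Y" Y] by simp
  also have "\<dots> \<le> measure M (S1 \<union> S2 \<union> S3)"
    by (rule finite_measure_mono[OF _ ss2(2)]) (auto simp: X_def Y_def S1_def S2_def S3_def bx_def)
  also have "\<dots> \<le> measure M S1 + measure M S2 + measure M S3"
    using measure_Un_le[of "S1 \<union> S2" M S3] measure_Un_le[of S1 M S2] ss2 by simp
  also have "\<dots> \<le> \<bar>fst x - fst y\<bar> + \<bar>fst (snd x) - fst (snd y)\<bar> + \<bar>snd (snd x) - snd (snd y)\<bar>"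
  proof -
    have "measure M S1 \<le> \<bar>fst x - fst y\<bar>" unfolding S1_def
      by (rule slab[OF m1(1)]) (use mg1 r in auto)
    moreover have "measure M S2 \<le> \<bar>fst (snd x) - fst (snd y)\<bar>" unfolding S2_def
      by (rule slab[OF m1(2)]) (use mg2 r in auto)
    moreover have "measure M S3 \<le> \<bar>snd (snd x) - snd (snd y)\<bar>" unfolding S3_def
      by (rule slab[OF m1(3)]) (use mg3 r in auto)
    ultimately show ?thesis by argo
  qed
  finally show ?thesis unfolding X_def Y_def .
qed


lemma Cm_cont: "continuous_on unit_cube3 (Cm M)"
  unfolding continuous_on_iff
proof (intro ballI allI impI)
  fix x e assume x: "x \<in> unit_cube3" and e: "(0::real) < e"
  show "\<exists>d>0. \<forall>x'\<in>unit_cube3. dist x' x < d \<longrightarrow> dist (Cm M x') (Cm M x) < e"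
  proof (intro exI[of _ "e/3"] conjI ballI impI)
    fix y assume y: "y \<in> unit_cube3" and d: "dist y x < e/3"
    have d1: "\<bar>fst y - fst x\<bar> \<le> dist y x" using dist_fst_le[of y x] by (simp add: dist_real_def)
    have d2: "\<bar>fst (snd y) - fst (snd x)\<bar> \<le> dist y x"
      using dist_fst_le[of "snd y" "snd x"] dist_snd_le[of y x] by (simp add: dist_real_def)
    have d3: "\<bar>snd (snd y) - snd (snd x)\<bar> \<le> dist y x"
      using dist_snd_le[of "snd y" "snd x"] dist_snd_le[of y x] by (simp add: dist_real_def)
    have "\<bar>Cm M y - Cm M x\<bar> \<le> \<bar>fst y - fst x\<bar> + \<bar>fst (snd y) - fst (snd x)\<bar> + \<bar>snd (snd y) - snd (snd x)\<bar>"
      using lip_half[OF x y] lip_half[OF y x] unfolding Cm_def by (simp add: abs_le_iff abs_minus_commute)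
    then show "dist (Cm M y) (Cm M x) < e" using d1 d2 d3 d by (simp add: dist_real_def)
  qed (use e in simp)
qed

end

locale cmP = cm3 +
  assumes p13: "\<And>u v. u \<in> {0..1} \<Longrightarrow> v \<in> {0..1} \<Longrightarrow> measure M (bx u 1 v) = u * v"
    and p23: "\<And>u v. u \<in> {0..1} \<Longrightarrow> v \<in> {0..1} \<Longrightarrow> measure M (bx 1 u v) = u * v"
begin

lemma meas_eq_cube: "X \<in> sets borel \<Longrightarrow> Y \<in> sets borel \<Longrightarrow> X \<inter> unit_cube3 = Y \<inter> unit_cube3 \<Longrightarrow> measure M X = measure M Y"
  using meas_cube by metis

lemma incl:
  assumes S: "S \<in> sets borel"
  shows "measure M ({0..u1} \<times> UNIV \<times> S) + measure M (UNIV \<times> {0..u2} \<times> S) - measure M (UNIV \<times> UNIV \<times> S) \<le> measure M ({0..u1} \<times> {0..u2} \<times> S)"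
    and "measure M ({0..u1} \<times> {0..u2} \<times> S) \<le> measure M ({0..u1} \<times> UNIV \<times> S)"
    and "measure M ({0..u1} \<times> {0..u2} \<times> S) \<le> measure M (UNIV \<times> {0..u2} \<times> S)"
proof -
  define A where "A = {0..u1} \<times> (UNIV::real set) \<times> S"
  define B where "B = (UNIV::real set) \<times> {0..u2} \<times> S"
  define T where "T = (UNIV::real set) \<times> (UNIV::real set) \<times> S"
  have sA: "A \<in> sets M" "B \<in> sets M" "T \<in> sets M" unfolding A_def B_def T_def using S
    by (auto intro!: inM bor)
  have AB: "B \<inter> A = {0..u1} \<times> {0..u2} \<times> S" unfolding A_def B_def by auto
  have sAB: "B \<inter> A \<in> sets M" using sA by auto
  have "measure M (A \<union> B) = measure M A + measure M (B - A)" using sA by (intro finite_measure_Union')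
  also have "measure M (B - A) = measure M B - measure M (B \<inter> A)" using sA by (intro finite_measure_Diff')
  finally have U: "measure M (A \<union> B) = measure M A + measure M B - measure M (B \<inter> A)" by simp
  have "measure M (A \<union> B) \<le> measure M T" using sA by (intro finite_measure_mono) (auto simp: A_def B_def T_def)
  then show "measure M ({0..u1} \<times> UNIV \<times> S) + measure M (UNIV \<times> {0..u2} \<times> S) - measure M (UNIV \<times> UNIV \<times> S) \<le> measure M ({0..u1} \<times> {0..u2} \<times> S)"
    using U unfolding AB by (simp add: A_def B_def T_def)
  show "measure M ({0..u1} \<times> {0..u2} \<times> S) \<le> measure M ({0..u1} \<times> UNIV \<times> S)"
    using sA by (intro finite_measure_mono) (auto simp: A_def)
  show "measure M ({0..u1} \<times> {0..u2} \<times> S) \<le> measure M (UNIV \<times> {0..u2} \<times> S)"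
    using sA by (intro finite_measure_mono) (auto simp: B_def)
qed

lemma val_lo:
  assumes r: "u1 \<in> {0..1}" "u2 \<in> {0..1}" "v \<in> {0..1}"
  shows "measure M ({0..u1} \<times> UNIV \<times> {0..v}) = u1 * v"
    and "measure M (UNIV \<times> {0..u2} \<times> {0..v}) = u2 * v"
    and "measure M (UNIV \<times> UNIV \<times> {0..v}) = v"
proof -
  have "measure M ({0..u1} \<times> UNIV \<times> {0..v}) = measure M (bx u1 1 v)"
    by (rule meas_eq_cube) (auto simp: bx_def unit_cube3_def intro!: bor)
  then show "measure M ({0..u1} \<times> UNIV \<times> {0..v}) = u1 * v" using p13 r by simp
  have "measure M (UNIV \<times> {0..u2} \<times> {0..v}) = measure M (bx 1 u2 v)"
    by (rule meas_eq_cube) (auto simp: bx_def unit_cube3_def intro!: bor)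
  then show "measure M (UNIV \<times> {0..u2} \<times> {0..v}) = u2 * v" using p23 r by simp
  have "measure M (UNIV \<times> UNIV \<times> {0..v}) = measure M (bx 1 1 v)"
    by (rule meas_eq_cube) (auto simp: bx_def unit_cube3_def intro!: bor)
  then show "measure M (UNIV \<times> UNIV \<times> {0..v}) = v" using p13[of 1 v] r by simp
qed

lemma val_hi:
  assumes r: "u1 \<in> {0..1}" "u2 \<in> {0..1}" "v \<in> {0..1}"
  shows "measure M ({0..u1} \<times> UNIV \<times> {v<..1}) = u1 * (1 - v)"
    and "measure M (UNIV \<times> {0..u2} \<times> {v<..1}) = u2 * (1 - v)"
    and "measure M (UNIV \<times> UNIV \<times> {v<..1}) = 1 - v"
    and "measure M ({0..u1} \<times> {0..u2} \<times> {v<..1}) = measure M (bx u1 u2 1) - measure M (bx u1 u2 v)"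
proof -
  have e: "A \<times> B \<times> {v<..1} = A \<times> B \<times> {0..1} - A \<times> B \<times> {0..v}" for A B :: "real set"
    using r by auto
  have m: "measure M (A \<times> B \<times> {v<..1}) = measure M (A \<times> B \<times> {0..1}) - measure M (A \<times> B \<times> {0..v})"
    if "A \<in> sets borel" "B \<in> sets borel" for A B :: "real set"
    unfolding e using that r by (intro finite_measure_Diff) (auto intro!: inM bor)
  have b1: "{0..u1} \<in> sets borel" "(UNIV::real set) \<in> sets borel" "{0..u2} \<in> sets borel"
    by (auto intro!: bor)
  show "measure M ({0..u1} \<times> UNIV \<times> {v<..1}) = u1 * (1 - v)"
    using m[OF b1(1) b1(2)] val_lo[of u1 u2 1] val_lo[OF r] r by (simp add: algebra_simps)
  show "measure M (UNIV \<times> {0..u2} \<times> {v<..1}) = u2 * (1 - v)"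
    using m[OF b1(2) b1(3)] val_lo[of u1 u2 1] val_lo[OF r] r by (simp add: algebra_simps)
  show "measure M (UNIV \<times> UNIV \<times> {v<..1}) = 1 - v"
    using m[OF b1(2) b1(2)] val_lo[of u1 u2 1] val_lo[OF r] r by (simp add: algebra_simps)
  show "measure M ({0..u1} \<times> {0..u2} \<times> {v<..1}) = measure M (bx u1 u2 1) - measure M (bx u1 u2 v)"
    using m[OF b1(1) b1(3)] by (simp add: bx_def)
qed

end

lemma set_int_AE_cong:
  fixes f g :: "real \<Rightarrow> real"
  assumes S[measurable]: "S \<in> sets borel" and g[measurable]: "g \<in> borel_measurable borel"
    and ae: "AE t in lborel. t \<in> S \<longrightarrow> f t = g t"
  shows "set_lebesgue_integral lebesgue S f = set_lebesgue_integral lborel S g"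
proof -
  let ?hf = "\<lambda>t. indicator S t *\<^sub>R f t" and ?hg = "\<lambda>t. indicator S t *\<^sub>R g t"
  have hg: "?hg \<in> borel_measurable borel" by measurable
  have hgL: "?hg \<in> borel_measurable lebesgue" by (rule measurable_completion) (use hg in simp)
  have ae': "AE t in lborel. ?hg t = ?hf t" using ae by eventually_elim (auto simp: indicator_def)
  have aeL: "AE t in lebesgue. ?hg t = ?hf t" by (rule AE_completion[OF ae'])
  have hfL: "?hf \<in> borel_measurable lebesgue" by (rule borel_measurable_AE[OF hgL aeL])
  have "integral\<^sup>L lebesgue ?hf = integral\<^sup>L lebesgue ?hg"
    by (rule integral_cong_AE[OF hfL hgL]) (use aeL in \<open>eventually_elim, auto\<close>)
  also have "\<dots> = integral\<^sup>L lborel ?hg" by (rule integral_completion) (use hg in simp)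
  finally show ?thesis unfolding set_lebesgue_integral_def .
qed

definition D3 :: "(real \<times> real \<times> real) measure \<Rightarrow> real measure" where
  "D3 M = distr M borel (\<lambda>x. snd (snd x))"

definition U01 :: "real measure" where
  "U01 = density lborel (\<lambda>x. ennreal (indicator {0..1::real} x))"

lemma p3_meas[measurable]: "(\<lambda>x::real\<times>real\<times>real. snd (snd x)) \<in> borel_measurable borel"
  by (auto intro!: borel_measurable_continuous_onI continuous_on_fst continuous_on_snd continuous_on_id)

lemma p12_meas[measurable]: "(\<lambda>x::real\<times>real\<times>real. (fst x, fst (snd x))) \<in> borel_measurable borel"
  by (auto intro!: borel_measurable_continuous_onI continuous_on_fst continuous_on_snd continuous_on_id continuous_on_Pair)

lemma sets_U01[simp]: "sets U01 = sets borel" by (simp add: U01_def)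

lemma emeasure_U01: "emeasure U01 {..a} = (if a < 0 then 0 else if a \<le> 1 then ennreal a else 1)"
proof -
  have "emeasure U01 {..a} = emeasure lborel ({0..1} \<inter> {..a})"
    unfolding U01_def ennreal_indicator by (rule emeasure_restricted) auto
  also have "\<dots> = (if a < 0 then 0 else if a \<le> 1 then ennreal a else 1)"
  proof -
    consider "a < 0" | "0 \<le> a" "a \<le> 1" | "1 < a" by argo
    then show ?thesis
    proof cases
      case 1 then have "{0..1} \<inter> {..a} = ({}::real set)" by auto
      then show ?thesis using 1 by simp
    next
      case 2 then have "{0..1} \<inter> {..a} = {0..a}" by auto
      then show ?thesis using 2 by simp
    next
      case 3 then have "{0..1} \<inter> {..a} = {0..1::real}" by auto
      then show ?thesis using 3 by simp
    qed
  qed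
  finally show ?thesis .
qed

context cmP
begin

lemma p3_val: "measure M {x. snd (snd x) \<le> a} = (if a < 0 then 0 else if a \<le> 1 then a else 1)"
proof -
  have sb: "{x::real\<times>real\<times>real. snd (snd x) \<le> b} \<in> sets borel" for b by measurable
  consider "a < 0" | "0 \<le> a" "a \<le> 1" | "1 < a" by argo
  then show ?thesis
  proof cases
    case 1
    then have "{x::real\<times>real\<times>real. snd (snd x) \<le> a} \<inter> unit_cube3 = {}" by (auto simp: unit_cube3_def)
    then show ?thesis using meas_cube[OF sb[of a]] 1 by simp
  next
    case 2 then show ?thesis using mg3[of a] by simp
  next
    case 3
    then have "measure M {x. snd (snd x) \<le> a} = measure M {x. snd (snd x) \<le> 1}"
      by (intro meas_eq_cube sb) (auto simp: unit_cube3_def)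
    then show ?thesis using mg3[of 1] 3 by simp
  qed
qed

lemma sets_D3[simp]: "sets (D3 M) = sets borel" by (simp add: D3_def)

lemma prob_D3: "prob_space (D3 M)"
  unfolding D3_def by (rule prob_space_distr) (simp add: measurable_cong_sets[OF sets_M refl])

lemma p3M[measurable]: "(\<lambda>x::real\<times>real\<times>real. snd (snd x)) \<in> borel_measurable M"
  by (simp add: measurable_cong_sets[OF sets_M refl])

lemma emeasure_D3: "B \<in> sets borel \<Longrightarrow> emeasure (D3 M) B = emeasure M {x. snd (snd x) \<in> B}"
  unfolding D3_def by (subst emeasure_distr) (auto simp: space_M vimage_def)

lemma D3_eq: "D3 M = U01"
proof (rule meas_eq_atMost)
  show "finite_measure (D3 M)" using prob_D3 by (simp add: prob_space_def)
  show "sets (D3 M) = sets borel" "sets U01 = sets borel" by simp_all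
  fix a :: real
  have "emeasure (D3 M) {..a} = emeasure M {x. snd (snd x) \<le> a}"
    by (subst emeasure_D3) auto
  also have "\<dots> = ennreal (measure M {x. snd (snd x) \<le> a})" by (simp add: emeasure_eq_measure)
  also have "\<dots> = emeasure U01 {..a}" unfolding p3_val emeasure_U01 by simp
  finally show "emeasure (D3 M) {..a} = emeasure U01 {..a}" .
qed


lemma indep_AE:
  fixes K :: "real \<Rightarrow> (real \<times> real) measure"
  assumes rcd: "reg_cond_dist M K"
    and A[measurable]: "A \<in> sets (borel :: (real\<times>real) measure)" and r: "0 \<le> r"
    and hyp: "\<And>v. v \<in> {0..1} \<Longrightarrow> measure M {x. (fst x, fst (snd x)) \<in> A \<and> snd (snd x) \<le> v} = r * v"
  shows "AE t in lborel. t \<in> {0..1} \<longrightarrow> measure (K t) A = r"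
proof -
  let ?p = "\<lambda>x::real\<times>real\<times>real. snd (snd x)"
  let ?SA = "{x::real\<times>real\<times>real. (fst x, fst (snd x)) \<in> A}"
  interpret D: prob_space "D3 M" by (rule prob_D3)
  have SA[measurable]: "?SA \<in> sets borel" by measurable
  have SAb: "?SA \<inter> {x. ?p x \<in> B} \<in> sets borel" if "B \<in> sets borel" for B
    using that by measurable
  define N1 where "N1 = distr (density M (indicator ?SA)) borel ?p"
  define N2 where "N2 = density (D3 M) (\<lambda>_. ennreal r)"
  have eN1: "emeasure N1 B = emeasure M (?SA \<inter> {x. ?p x \<in> B})" if B: "B \<in> sets borel" for B
  proof -
    have "emeasure N1 B = emeasure (density M (indicator ?SA)) (?p -` B \<inter> space (density M (indicator ?SA)))"
      unfolding N1_def by (rule emeasure_distr) (use B in \<open>auto simp: measurable_cong_sets[OF sets_density refl]\<close>)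
    also have "\<dots> = emeasure M (?SA \<inter> (?p -` B \<inter> space (density M (indicator ?SA))))"
      using measurable_sets[OF p3_meas B] by (intro emeasure_restricted) (auto simp: space_M intro!: inM)
    finally show ?thesis by (simp add: space_M vimage_def)
  qed
  have eN2: "emeasure N2 B = ennreal r * emeasure M {x. ?p x \<in> B}" if B: "B \<in> sets borel" for B
    unfolding N2_def using B by (simp add: emeasure_density_const emeasure_D3)
  have N12: "N1 = N2"
  proof (rule meas_eq_atMost)
    show "finite_measure N1"
    proof (rule finite_measureI)
      have "emeasure N1 (space N1) = emeasure M (?SA \<inter> {x. ?p x \<in> UNIV})"
        by (subst eN1[symmetric]) (auto simp: N1_def)
      then show "emeasure N1 (space N1) \<noteq> \<infinity>" by (simp add: emeasure_eq_measure)
    qed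
    show "sets N1 = sets borel" by (simp add: N1_def)
    show "sets N2 = sets borel" by (simp add: N2_def)
    fix a :: real
    have m: "measure M (?SA \<inter> {x. ?p x \<in> {..a}}) = r * measure M {x. ?p x \<in> {..a}}"
    proof -
      have sb: "?SA \<inter> {x. ?p x \<le> b} \<in> sets borel" for b by measurable
      consider "a < 0" | "0 \<le> a" "a \<le> 1" | "1 < a" by argo
      then show ?thesis
      proof cases
        case 1
        then have "(?SA \<inter> {x. ?p x \<le> a}) \<inter> unit_cube3 = {}" by (auto simp: unit_cube3_def)
        then show ?thesis using meas_cube[OF sb[of a]] p3_val[of a] 1 by simp
      next
        case 2
        have "?SA \<inter> {x. ?p x \<le> a} = {x. (fst x, fst (snd x)) \<in> A \<and> snd (snd x) \<le> a}" by auto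
        then show ?thesis using hyp[of a] 2 p3_val[of a] by simp
      next
        case 3
        have "measure M (?SA \<inter> {x. ?p x \<le> a}) = measure M (?SA \<inter> {x. ?p x \<le> 1})"
          by (intro meas_eq_cube sb) (use 3 in \<open>auto simp: unit_cube3_def\<close>)
        also have "?SA \<inter> {x. ?p x \<le> 1} = {x. (fst x, fst (snd x)) \<in> A \<and> snd (snd x) \<le> 1}" by auto
        finally show ?thesis using hyp[of 1] 3 p3_val[of a] by simp
      qed
    qed
    show "emeasure N1 {..a} = emeasure N2 {..a}"
      using m r by (simp add: eN1 eN2 emeasure_eq_measure ennreal_mult)
  qed
  have key: "measure M {x \<in> space M. (fst x, fst (snd x)) \<in> A \<and> snd (snd x) \<in> B} = r * measure (D3 M) B"
    if B: "B \<in> sets borel" for B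
  proof -
    have "emeasure M {x \<in> space M. (fst x, fst (snd x)) \<in> A \<and> snd (snd x) \<in> B} = emeasure N1 B"
      using B by (simp add: eN1 space_M Collect_conj_eq)
    also have "\<dots> = emeasure N2 B" by (simp add: N12)
    also have "\<dots> = ennreal (r * measure (D3 M) B)"
      using B r by (simp add: eN2 emeasure_D3[symmetric] D.emeasure_eq_measure ennreal_mult)
    finally show ?thesis using r
      by (simp add: emeasure_eq_measure measure_nonneg)
  qed
  have Km: "(\<lambda>t. measure (K t) A) \<in> borel_measurable borel" using rcd A unfolding reg_cond_dist_def by blast
  have KmD: "(\<lambda>t. measure (K t) A) \<in> borel_measurable (D3 M)"
    using Km by (simp add: measurable_cong_sets[OF sets_D3 refl])
  have ae: "AE t in D3 M. measure (K t) A = r"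
  proof (rule density_unique_real)
    show "integrable (D3 M) (\<lambda>t. measure (K t) A)"
    proof (rule D.integrable_const_bound[where B=1])
      show "AE x in D3 M. norm (measure (K x) A) \<le> 1"
        using rcd unfolding reg_cond_dist_def by (auto intro!: AE_I2 prob_space.prob_le_1)
    qed (rule KmD)
    show "integrable (D3 M) (\<lambda>t. r)" by simp
    fix B assume B: "B \<in> sets (D3 M)"
    have "set_lebesgue_integral (D3 M) B (\<lambda>t. measure (K t) A) = measure M {x \<in> space M. (fst x, fst (snd x)) \<in> A \<and> snd (snd x) \<in> B}"
      using rcd A B unfolding reg_cond_dist_def D3_def by simp
    also have "\<dots> = r * measure (D3 M) B" using key B by simp
    also have "\<dots> = set_lebesgue_integral (D3 M) B (\<lambda>t. r)"
      using B by (simp add: set_integral_const D.emeasure_eq_measure)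
    finally show "set_lebesgue_integral (D3 M) B (\<lambda>t. measure (K t) A) = set_lebesgue_integral (D3 M) B (\<lambda>t. r)" .
  qed
  then have "AE t in U01. measure (K t) A = r" by (simp only: D3_eq)
  then show ?thesis unfolding U01_def
    by (subst (asm) AE_density) (auto elim!: AE_mp intro!: AE_I2 simp: indicator_def)
qed


lemma cm1_AE:
  assumes rcd: "reg_cond_dist M K" and u: "u \<in> {0..1}"
  shows "AE t in lborel. t \<in> {0..1} \<longrightarrow> cond_marg1 K u t = u"
  unfolding cond_marg1_def
proof (rule indep_AE[OF rcd])
  show "{0..u} \<times> {0..1} \<in> sets (borel :: (real\<times>real) measure)" by (intro bor)
  show "0 \<le> u" using u by simp
  fix v :: real assume v: "v \<in> {0..1}"
  have Ab[measurable]: "{0..u} \<times> {0..1} \<in> sets (borel :: (real\<times>real) measure)" by (intro bor)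
  have sb: "{x::real\<times>real\<times>real. (fst x, fst (snd x)) \<in> {0..u} \<times> {0..1} \<and> snd (snd x) \<le> v} \<in> sets borel"
    by measurable
  have "measure M {x. (fst x, fst (snd x)) \<in> {0..u} \<times> {0..1} \<and> snd (snd x) \<le> v} = measure M (bx u 1 v)"
    by (intro meas_eq_cube[OF sb bx_borel]) (auto simp: bx_def unit_cube3_def)
  then show "measure M {x. (fst x, fst (snd x)) \<in> {0..u} \<times> {0..1} \<and> snd (snd x) \<le> v} = u * v"
    using p13[OF u v] by simp
qed

lemma cm2_AE:
  assumes rcd: "reg_cond_dist M K" and u: "u \<in> {0..1}"
  shows "AE t in lborel. t \<in> {0..1} \<longrightarrow> cond_marg2 K u t = u"
  unfolding cond_marg2_def
proof (rule indep_AE[OF rcd])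
  show "{0..1} \<times> {0..u} \<in> sets (borel :: (real\<times>real) measure)" by (intro bor)
  show "0 \<le> u" using u by simp
  fix v :: real assume v: "v \<in> {0..1}"
  have Ab[measurable]: "{0..1} \<times> {0..u} \<in> sets (borel :: (real\<times>real) measure)" by (intro bor)
  have sb: "{x::real\<times>real\<times>real. (fst x, fst (snd x)) \<in> {0..1} \<times> {0..u} \<and> snd (snd x) \<le> v} \<in> sets borel"
    by measurable
  have "measure M {x. (fst x, fst (snd x)) \<in> {0..1} \<times> {0..u} \<and> snd (snd x) \<le> v} = measure M (bx 1 u v)"
    by (intro meas_eq_cube[OF sb bx_borel]) (auto simp: bx_def unit_cube3_def)
  then show "measure M {x. (fst x, fst (snd x)) \<in> {0..1} \<times> {0..u} \<and> snd (snd x) \<le> v} = u * v"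
    using p23[OF u v] by simp
qed

lemma Ct_AE:
  assumes rcd: "reg_cond_dist M K" and cc: "cond_copula K Ct" and u: "u1 \<in> {0..1}" "u2 \<in> {0..1}"
  shows "AE t in lborel. t \<in> {0..1} \<longrightarrow> Ct t (u1, u2) = measure (K t) ({0..u1} \<times> {0..u2})"
  using cc[unfolded cond_copula_def] cm1_AE[OF rcd u(1)] cm2_AE[OF rcd u(2)]
  by eventually_elim (use u in auto)

lemma pc_val:
  assumes rcd: "reg_cond_dist M K" and cc: "cond_copula K Ct" and u: "u1 \<in> {0..1}" "u2 \<in> {0..1}"
  shows "partial_copula Ct (u1, u2) = measure M (bx u1 u2 1)"
proof -
  let ?A = "{0..u1} \<times> {0..u2} :: (real \<times> real) set"
  let ?g = "\<lambda>t. measure (K t) ?A"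
  have A[measurable]: "?A \<in> sets borel" by (intro bor)
  have g[measurable]: "?g \<in> borel_measurable borel" using rcd A unfolding reg_cond_dist_def by blast
  have "partial_copula Ct (u1, u2) = set_lebesgue_integral lborel {0..1} ?g"
    unfolding partial_copula_def by (rule set_int_AE_cong[OF _ g Ct_AE[OF rcd cc u]]) simp
  also have "\<dots> = integral\<^sup>L lborel (\<lambda>t. indicator {0..1} t *\<^sub>R ?g t)"
    by (simp add: set_lebesgue_integral_def)
  also have "\<dots> = integral\<^sup>L U01 ?g"
    unfolding U01_def by (rule integral_density[symmetric]) auto
  also have "\<dots> = integral\<^sup>L (D3 M) ?g" by (simp only: D3_eq)
  also have "\<dots> = set_lebesgue_integral (D3 M) UNIV ?g"
    by (simp add: set_lebesgue_integral_def)
  also have "\<dots> = measure M {x \<in> space M. (fst x, fst (snd x)) \<in> ?A \<and> snd (snd x) \<in> UNIV}"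
  proof -
    have R: "\<forall>A\<in>sets (borel::(real\<times>real) measure). \<forall>B\<in>sets (borel::real measure).
        measure M {x \<in> space M. (fst x, fst (snd x)) \<in> A \<and> snd (snd x) \<in> B} =
        set_lebesgue_integral (distr M borel (\<lambda>x. snd (snd x))) B (\<lambda>t. measure (K t) A)"
      using rcd unfolding reg_cond_dist_def by blast
    show ?thesis unfolding D3_def by (rule R[rule_format, OF A UNIV_borel, symmetric])
  qed
  also have "\<dots> = measure M (bx u1 u2 1)"
  proof (rule meas_eq_cube[OF _ bx_borel])
    show "{x \<in> space M. (fst x, fst (snd x)) \<in> ?A \<and> snd (snd x) \<in> UNIV} \<in> sets borel"
      unfolding space_M by measurable
  qed (auto simp: bx_def unit_cube3_def space_M)
  finally show ?thesis .
qed

lemma psi_val: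
  assumes rcd: "reg_cond_dist M K" and cc: "cond_copula K Ct" and x: "x \<in> unit_cube3"
  shows "psi K Ct x = snd (snd x) * measure M (bx (fst x) (fst (snd x)) 1)"
proof -
  have u: "fst x \<in> {0..1}" "fst (snd x) \<in> {0..1}" "snd (snd x) \<in> {0..1}" using x by (auto simp: unit_cube3_def)
  let ?P = "partial_copula Ct (fst x, fst (snd x))"
  have ae: "AE t in lborel. t \<in> {0..snd (snd x)} \<longrightarrow>
      partial_copula Ct (cond_marg1 K (fst x) t, cond_marg2 K (fst (snd x)) t) = ?P"
    using cm1_AE[OF rcd u(1)] cm2_AE[OF rcd u(2)] by eventually_elim (use u in auto)
  have "psi K Ct x = set_lebesgue_integral lborel {0..snd (snd x)} (\<lambda>t. ?P)"
    unfolding psi_def by (rule set_int_AE_cong[OF _ _ ae]) auto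
  also have "\<dots> = snd (snd x) * ?P"
    using u by (subst set_integral_const) auto
  finally show ?thesis using pc_val[OF rcd cc u(1) u(2)] by simp
qed

end

context cm3
begin

lemma atMost_meas: "measure M {..a} = (if 0 \<le> fst a \<and> 0 \<le> fst (snd a) \<and> 0 \<le> snd (snd a)
    then measure M (bx (min (fst a) 1) (min (fst (snd a)) 1) (min (snd (snd a)) 1)) else 0)"
proof (cases "0 \<le> fst a \<and> 0 \<le> fst (snd a) \<and> 0 \<le> snd (snd a)")
  case True
  have "measure M {..a} = measure M ({..a} \<inter> unit_cube3)" by (rule meas_cube) simp
  also have "{..a} \<inter> unit_cube3 = bx (min (fst a) 1) (min (fst (snd a)) 1) (min (snd (snd a)) 1) \<inter> unit_cube3"
    by (auto simp: bx_def unit_cube3_def less_eq_prod_def)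
  also have "measure M \<dots> = measure M (bx (min (fst a) 1) (min (fst (snd a)) 1) (min (snd (snd a)) 1))"
    by (rule meas_cube[symmetric]) simp
  finally show ?thesis using True by simp
next
  case False
  have "measure M {..a} = measure M ({..a} \<inter> unit_cube3)" by (rule meas_cube) simp
  also have "{..a} \<inter> unit_cube3 = {}"
    using False by (auto simp: unit_cube3_def less_eq_prod_def)
  finally have "measure M {..a} = 0" by simp
  then show ?thesis using False by (subst if_not_P) auto
qed

end

context cmP
begin

lemma bound_at:
  assumes r: "u1 \<in> {0..1}" "u2 \<in> {0..1}" "v \<in> {0..1}"
  shows "\<bar>measure M (bx u1 u2 v) - v * measure M (bx u1 u2 1)\<bar> \<le> 1/8 \<and>
    (\<bar>measure M (bx u1 u2 v) - v * measure M (bx u1 u2 1)\<bar> = 1/8 \<longrightarrow>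
     v = 1/2 \<and> u1 = 1/2 \<and> u2 = 1/2 \<and>
     ((measure M (bx u1 u2 v) = 1/4 \<and> measure M (bx u1 u2 1) = 1/4) \<or>
      (measure M (bx u1 u2 v) = 0 \<and> measure M (bx u1 u2 1) = 1/4)))"
proof (rule arith_bound)
  have i1: "measure M ({0..u1} \<times> UNIV \<times> {0..v}) + measure M (UNIV \<times> {0..u2} \<times> {0..v}) - measure M (UNIV \<times> UNIV \<times> {0..v}) \<le> measure M ({0..u1} \<times> {0..u2} \<times> {0..v})"
    "measure M ({0..u1} \<times> {0..u2} \<times> {0..v}) \<le> measure M ({0..u1} \<times> UNIV \<times> {0..v})"
    "measure M ({0..u1} \<times> {0..u2} \<times> {0..v}) \<le> measure M (UNIV \<times> {0..u2} \<times> {0..v})"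
    by (rule incl; simp)+
  have i2: "measure M ({0..u1} \<times> UNIV \<times> {v<..1}) + measure M (UNIV \<times> {0..u2} \<times> {v<..1}) - measure M (UNIV \<times> UNIV \<times> {v<..1}) \<le> measure M ({0..u1} \<times> {0..u2} \<times> {v<..1})"
    "measure M ({0..u1} \<times> {0..u2} \<times> {v<..1}) \<le> measure M ({0..u1} \<times> UNIV \<times> {v<..1})"
    "measure M ({0..u1} \<times> {0..u2} \<times> {v<..1}) \<le> measure M (UNIV \<times> {0..u2} \<times> {v<..1})"
    by (rule incl; simp)+
  note lo = val_lo[OF r] and hi = val_hi[OF r]
  have bxe: "bx u1 u2 v = {0..u1} \<times> {0..u2} \<times> {0..v}" by (simp add: bx_def)
  show "0 \<le> u1" "u1 \<le> 1" "0 \<le> u2" "u2 \<le> 1" "0 \<le> v" "v \<le> 1" using r by auto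
  show "measure M (bx u1 u2 v) \<le> u1 * v" using i1(2) lo(1) bxe by simp
  show "measure M (bx u1 u2 v) \<le> u2 * v" using i1(3) lo(2) bxe by simp
  show "u1 * v + u2 * v - v \<le> measure M (bx u1 u2 v)" using i1(1) lo bxe by simp
  show "0 \<le> measure M (bx u1 u2 v)" by simp
  show "measure M (bx u1 u2 1) - measure M (bx u1 u2 v) \<le> u1 * (1 - v)" using i2(2) hi(1) hi(4) by simp
  show "measure M (bx u1 u2 1) - measure M (bx u1 u2 v) \<le> u2 * (1 - v)" using i2(3) hi(2) hi(4) by simp
  show "u1 * (1 - v) + u2 * (1 - v) - (1 - v) \<le> measure M (bx u1 u2 1) - measure M (bx u1 u2 v)"
    using i2(1) hi by simp
  show "0 \<le> measure M (bx u1 u2 1) - measure M (bx u1 u2 v)"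
    using hi(4) measure_nonneg[of M "{0..u1} \<times> {0..u2} \<times> {v<..1}"] by simp
qed

lemma cells:
  defines "q \<equiv> \<lambda>i j k. measure M (LH i \<times> LH j \<times> LH k)"
  shows "measure M (bx (1/2) (1/2) (1/2)) = q False False False"
    and "measure M (bx (1/2) (1/2) 1) = q False False False + q False False True"
    and "q False False False + q False True False = 1/4"
    and "q False False False + q False False True + q False True False + q False True True = 1/2"
    and "q False False False + q False True False + q True False False + q True True False = 1/2"
    and "q False False False + q True False False = 1/4"
    and "q False False False + q False False True + q True False False + q True False True = 1/2"
    and "q False False False + q False False True + q False True False + q False True True +
         q True False False + q True False True + q True True False + q True True True = 1"
proof -
  note e = split8_bx[unfolded sum8, simplified, unfolded LH_Int Times_empty, simplified]
  show "measure M (bx (1/2) (1/2) (1/2)) = q False False False"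
    using e[of "1/2" "1/2" "1/2"] unfolding q_def by (simp add: LH_Int)
  show "measure M (bx (1/2) (1/2) 1) = q False False False + q False False True"
    using e[of "1/2" "1/2" 1] unfolding q_def by (simp add: LH_Int)
  show "q False False False + q False True False = 1/4"
    using e[of "1/2" 1 "1/2"] p13[of "1/2" "1/2"] unfolding q_def by (simp add: LH_Int)
  show "q False False False + q False False True + q False True False + q False True True = 1/2"
    using e[of "1/2" 1 1] p13[of "1/2" 1] unfolding q_def by (simp add: LH_Int add.assoc)
  show "q False False False + q False True False + q True False False + q True True False = 1/2"
    using e[of 1 1 "1/2"] p13[of 1 "1/2"] unfolding q_def by (simp add: LH_Int add.assoc)
  show "q False False False + q True False False = 1/4"
    using e[of 1 "1/2" "1/2"] p23[of "1/2" "1/2"] unfolding q_def by (simp add: LH_Int)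
  show "q False False False + q False False True + q True False False + q True False True = 1/2"
    using e[of 1 "1/2" 1] p23[of "1/2" 1] unfolding q_def by (simp add: LH_Int add.assoc)
  show "q False False False + q False False True + q False True False + q False True True +
         q True False False + q True False True + q True True False + q True True True = 1"
    using e[of 1 1 1] p13[of 1 1] unfolding q_def by (simp add: LH_Int add.assoc)
qed

end

lemma cm3_of: "copula_measure3 M \<Longrightarrow> cm3 M"
  unfolding copula_measure3_def cm3_def cm3_axioms_def by auto

theorem theorem5p2:
  fixes C :: "real \<times> real \<times> real \<Rightarrow> real"
    and K :: "real \<Rightarrow> (real \<times> real) measure"
    and Ct :: "real \<Rightarrow> real \<times> real \<Rightarrow> real"
  assumes "F_Pi3 C"
    and "reg_cond_dist (mu_C C) K"
    and "cond_copula K Ct"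
  shows "d_inf C (psi K Ct) \<le> 1/8 \<and>
    (d_inf C (psi K Ct) = 1/8 \<longleftrightarrow>
      ((measure (mu_C C) ({0<..<1/2} \<times> {0<..<1/2} \<times> {0<..<1/2}) = 1/4 \<and>
        measure (mu_C C) ({0<..<1/2} \<times> {1/2<..<1} \<times> {1/2<..<1}) = 1/4 \<and>
        measure (mu_C C) ({1/2<..<1} \<times> {1/2<..<1} \<times> {0<..<1/2}) = 1/4 \<and>
        measure (mu_C C) ({1/2<..<1} \<times> {0<..<1/2} \<times> {1/2<..<1}) = 1/4) \<or>
       (measure (mu_C C) ({0<..<1/2} \<times> {0<..<1/2} \<times> {1/2<..<1}) = 1/4 \<and>
        measure (mu_C C) ({0<..<1/2} \<times> {1/2<..<1} \<times> {0<..<1/2}) = 1/4 \<and>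
        measure (mu_C C) ({1/2<..<1} \<times> {1/2<..<1} \<times> {1/2<..<1}) = 1/4 \<and>
        measure (mu_C C) ({1/2<..<1} \<times> {0<..<1/2} \<times> {0<..<1/2}) = 1/4)))"
proof -
  obtain M where cmM: "copula_measure3 M" and cdf: "is_cdf3_of C M"
    using assms(1) unfolding F_Pi3_def copula3_def by blast
  have c13: "\<And>u v. u \<in> {0..1} \<Longrightarrow> v \<in> {0..1} \<Longrightarrow> C (u, 1, v) = u * v"
    and c23: "\<And>u v. u \<in> {0..1} \<Longrightarrow> v \<in> {0..1} \<Longrightarrow> C (1, u, v) = u * v"
    using assms(1) unfolding F_Pi3_def by auto
  interpret cm3 M by (rule cm3_of[OF cmM])
  have Cbx: "C x = measure M (bx (fst x) (fst (snd x)) (snd (snd x)))" if "x \<in> unit_cube3" for x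
    using cdf that unfolding is_cdf3_of_def bx_def by blast
  have muM: "mu_C C = M"
    unfolding mu_C_def
  proof (rule the_equality)
    show "copula_measure3 M \<and> is_cdf3_of C M" using cmM cdf by simp
    fix M' assume M': "copula_measure3 M' \<and> is_cdf3_of C M'"
    interpret M': cm3 M' by (rule cm3_of) (use M' in simp)
    have Cbx': "C x = measure M' (bx (fst x) (fst (snd x)) (snd (snd x)))" if "x \<in> unit_cube3" for x
      using M' that unfolding is_cdf3_of_def bx_def by blast
    show "M' = M"
    proof (rule meas_eq_atMost)
      show "finite_measure M'" using M'.prob_space_axioms by (simp add: prob_space_def)
      show "sets M' = sets borel" "sets M = sets borel" by (simp_all add: M'.sets_M sets_M)
      fix a :: "real \<times> real \<times> real"
      let ?m = "(min (fst a) 1, min (fst (snd a)) 1, min (snd (snd a)) 1)"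
      have "measure M' {..a} = measure M {..a}"
      proof (cases "0 \<le> fst a \<and> 0 \<le> fst (snd a) \<and> 0 \<le> snd (snd a)")
        case True
        then have m: "?m \<in> unit_cube3" by (auto simp: unit_cube3_def)
        show ?thesis using True Cbx[OF m] Cbx'[OF m] by (simp add: atMost_meas M'.atMost_meas)
      next
        case False
        then show ?thesis by (simp only: atMost_meas M'.atMost_meas if_not_P[OF False] if_False)
      qed
      then show "emeasure M' {..a} = emeasure M {..a}"
        by (simp add: emeasure_eq_measure M'.emeasure_eq_measure)
    qed
  qed
  interpret cmP M
  proof
    fix u v :: real assume u: "u \<in> {0..1}" and v: "v \<in> {0..1}"
    have "(u, 1, v) \<in> unit_cube3" "(1, u, v) \<in> unit_cube3" using u v by (auto simp: unit_cube3_def)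
    then show "measure M (bx u 1 v) = u * v" "measure M (bx 1 u v) = u * v"
      using Cbx c13[OF u v] c23[OF u v] by auto
  qed
  have rcd: "reg_cond_dist M K" using assms(2) muM by simp
  define F where "F x = \<bar>Cm M x - snd (snd x) * Cm M (fst x, fst (snd x), 1)\<bar>" for x
  have dinf: "d_inf C (psi K Ct) = (SUP x\<in>unit_cube3. F x)"
    unfolding d_inf_def
  proof (rule SUP_cong[OF refl])
    fix x assume x: "x \<in> unit_cube3"
    show "\<bar>C x - psi K Ct x\<bar> = F x"
      unfolding F_def Cm_def using Cbx[OF x] psi_val[OF rcd assms(3) x] by simp
  qed
  have Fb: "F x \<le> 1/8 \<and> (F x = 1/8 \<longrightarrow> snd (snd x) = 1/2 \<and> fst x = 1/2 \<and> fst (snd x) = 1/2 \<and>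
      ((measure M (bx (1/2) (1/2) (1/2)) = 1/4 \<and> measure M (bx (1/2) (1/2) 1) = 1/4) \<or>
       (measure M (bx (1/2) (1/2) (1/2)) = 0 \<and> measure M (bx (1/2) (1/2) 1) = 1/4)))"
    if x: "x \<in> unit_cube3" for x
  proof -
    obtain u1 u2 v where xe: "x = (u1, u2, v)" by (cases x)
    have r: "u1 \<in> {0..1}" "u2 \<in> {0..1}" "v \<in> {0..1}" using x xe by (auto simp: unit_cube3_def)
    have E: "F x = \<bar>measure M (bx u1 u2 v) - v * measure M (bx u1 u2 1)\<bar>"
      unfolding F_def Cm_def xe by simp
    note B = bound_at[OF r]
    show ?thesis
    proof (intro conjI impI)
      show "F x \<le> 1/8" using B E by simp
      assume "F x = 1/8"
      then have B2: "v = 1/2 \<and> u1 = 1/2 \<and> u2 = 1/2 \<and>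
        ((measure M (bx u1 u2 v) = 1/4 \<and> measure M (bx u1 u2 1) = 1/4) \<or>
         (measure M (bx u1 u2 v) = 0 \<and> measure M (bx u1 u2 1) = 1/4))" using B E by simp
      then have hv: "v = 1/2" and hu1: "u1 = 1/2" and hu2: "u2 = 1/2" by blast+
      from B2 have D: "(measure M (bx u1 u2 v) = 1/4 \<and> measure M (bx u1 u2 1) = 1/4) \<or>
         (measure M (bx u1 u2 v) = 0 \<and> measure M (bx u1 u2 1) = 1/4)" by blast
      show "snd (snd x) = 1/2" "fst x = 1/2" "fst (snd x) = 1/2" using hv hu1 hu2 xe by simp_all
      show "(measure M (bx (1/2) (1/2) (1/2)) = 1/4 \<and> measure M (bx (1/2) (1/2) 1) = 1/4) \<or>
       (measure M (bx (1/2) (1/2) (1/2)) = 0 \<and> measure M (bx (1/2) (1/2) 1) = 1/4)"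
        using D unfolding hv hu1 hu2 .
    qed
  qed
  have cont: "continuous_on unit_cube3 F"
  proof -
    have g: "continuous_on unit_cube3 (\<lambda>x::real\<times>real\<times>real. (fst x, fst (snd x), 1::real))"
      by (intro continuous_intros)
    have gi: "(\<lambda>x::real\<times>real\<times>real. (fst x, fst (snd x), 1::real)) ` unit_cube3 \<subseteq> unit_cube3"
      by (auto simp: unit_cube3_def)
    have c2: "continuous_on unit_cube3 (\<lambda>x. Cm M (fst x, fst (snd x), 1))"
      by (rule continuous_on_compose2[OF Cm_cont g gi])
    show ?thesis unfolding F_def
      by (intro continuous_intros Cm_cont c2)
  qed
  have cpt: "compact unit_cube3" unfolding unit_cube3_def by (intro compact_Times compact_Icc)
  have ne: "unit_cube3 \<noteq> {}" by (auto simp: unit_cube3_def)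
  obtain x0 where x0: "x0 \<in> unit_cube3" and mx: "\<And>y. y \<in> unit_cube3 \<Longrightarrow> F y \<le> F x0"
    using continuous_attains_sup[OF cpt ne cont] by blast
  have sup: "(SUP x\<in>unit_cube3. F x) = F x0"
    by (rule cSup_eq_maximum) (use x0 mx in auto)
  have h: "(1/2, 1/2, 1/2) \<in> unit_cube3" by (auto simp: unit_cube3_def)
  have Fh: "F (1/2, 1/2, 1/2) = \<bar>measure M (bx (1/2) (1/2) (1/2)) - 1/2 * measure M (bx (1/2) (1/2) 1)\<bar>"
    unfolding F_def Cm_def by simp
  note cl = cells
  have LHe: "LH False = {0<..<1/2}" "LH True = {1/2<..<1}" by (simp_all add: LH_def)
  note cl = cl[unfolded LHe]
  have nn: "\<And>A. 0 \<le> measure M A" by simp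
  have nn0: "0 \<le> measure M ({0<..<1/2} \<times> {0<..<1/2} \<times> {0<..<1/2})" by simp
  have nn1: "0 \<le> measure M ({0<..<1/2} \<times> {0<..<1/2} \<times> {1/2<..<1})" by simp
  have nn2: "0 \<le> measure M ({0<..<1/2} \<times> {1/2<..<1} \<times> {0<..<1/2})" by simp
  have nn3: "0 \<le> measure M ({0<..<1/2} \<times> {1/2<..<1} \<times> {1/2<..<1})" by simp
  have nn4: "0 \<le> measure M ({1/2<..<1} \<times> {0<..<1/2} \<times> {0<..<1/2})" by simp
  have nn5: "0 \<le> measure M ({1/2<..<1} \<times> {0<..<1/2} \<times> {1/2<..<1})" by simp
  have nn6: "0 \<le> measure M ({1/2<..<1} \<times> {1/2<..<1} \<times> {0<..<1/2})" by simp
  have nn7: "0 \<le> measure M ({1/2<..<1} \<times> {1/2<..<1} \<times> {1/2<..<1})" by simp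
  have ub: "F x0 \<le> 1/8" using Fb[OF x0] by simp
  show ?thesis
    unfolding dinf sup muM
  proof (intro conjI ub iffI)
    assume "F x0 = 1/8"
    then have ac: "(measure M (bx (1/2) (1/2) (1/2)) = 1/4 \<and> measure M (bx (1/2) (1/2) 1) = 1/4) \<or>
       (measure M (bx (1/2) (1/2) (1/2)) = 0 \<and> measure M (bx (1/2) (1/2) 1) = 1/4)"
      using Fb[OF x0] by blast
    show "(measure M ({0<..<1/2} \<times> {0<..<1/2} \<times> {0<..<1/2}) = 1/4 \<and>
        measure M ({0<..<1/2} \<times> {1/2<..<1} \<times> {1/2<..<1}) = 1/4 \<and>
        measure M ({1/2<..<1} \<times> {1/2<..<1} \<times> {0<..<1/2}) = 1/4 \<and>
        measure M ({1/2<..<1} \<times> {0<..<1/2} \<times> {1/2<..<1}) = 1/4) \<or>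
       (measure M ({0<..<1/2} \<times> {0<..<1/2} \<times> {1/2<..<1}) = 1/4 \<and>
        measure M ({0<..<1/2} \<times> {1/2<..<1} \<times> {0<..<1/2}) = 1/4 \<and>
        measure M ({1/2<..<1} \<times> {1/2<..<1} \<times> {1/2<..<1}) = 1/4 \<and>
        measure M ({1/2<..<1} \<times> {0<..<1/2} \<times> {0<..<1/2}) = 1/4)"
      using ac cl nn0 nn1 nn2 nn3 nn4 nn5 nn6 nn7 by argo
  next
    assume "(measure M ({0<..<1/2} \<times> {0<..<1/2} \<times> {0<..<1/2}) = 1/4 \<and>
        measure M ({0<..<1/2} \<times> {1/2<..<1} \<times> {1/2<..<1}) = 1/4 \<and>
        measure M ({1/2<..<1} \<times> {1/2<..<1} \<times> {0<..<1/2}) = 1/4 \<and>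
        measure M ({1/2<..<1} \<times> {0<..<1/2} \<times> {1/2<..<1}) = 1/4) \<or>
       (measure M ({0<..<1/2} \<times> {0<..<1/2} \<times> {1/2<..<1}) = 1/4 \<and>
        measure M ({0<..<1/2} \<times> {1/2<..<1} \<times> {0<..<1/2}) = 1/4 \<and>
        measure M ({1/2<..<1} \<times> {1/2<..<1} \<times> {1/2<..<1}) = 1/4 \<and>
        measure M ({1/2<..<1} \<times> {0<..<1/2} \<times> {0<..<1/2}) = 1/4)"
    then have "(measure M (bx (1/2) (1/2) (1/2)) = 1/4 \<and> measure M (bx (1/2) (1/2) 1) = 1/4) \<or>
       (measure M (bx (1/2) (1/2) (1/2)) = 0 \<and> measure M (bx (1/2) (1/2) 1) = 1/4)"
      using cl nn0 nn1 nn2 nn3 nn4 nn5 nn6 nn7 by argo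
    then have "F (1/2, 1/2, 1/2) = 1/8" unfolding Fh by auto
    then show "F x0 = 1/8" using mx[OF h] ub by argo
  qed
qed

end
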